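(* Let $K$ be a field, $s\ge2$, $S=K[t_1,\ldots,t_s]$, and let $\mathcal{L}\subset\mathbb{Z}^s$ be a homogeneous lattice of rank $s-1$. Let ${\rm in}(I(\mathcal{L}))$ be the initial ideal of $I(\mathcal{L})$ with respect to the reverse lexicographical order. Then for every $\widetilde{\alpha}=\alpha+\mathcal{L}$ in the torsion subgroup $T(\mathbb{Z}^s/\mathcal{L})$ there exists a unique $a=(a_1,\ldots,a_s)\in\mathbb{Z}^s$ such that (i) $a_i\ge0$ for $i=1,\ldots,s-1$; (ii) $t_1^{a_1}\cdots t_{s-1}^{a_{s-1}}\notin{\rm in}(I(\mathcal{L}))$; and (iii) $a+\mathcal{L}=\alpha+\mathcal{L}$.
   Context: A lattice is a subgroup of $\mathbb{Z}^s$; it is homogeneous if $\sum_i a_i=0$ for every $a\in\mathcal{L}$. For $a\in\mathbb{Z}^s$ write $a=a^+-a^-$ with $a^+,a^-\in\mathbb{N}^s$ of disjoint supports, $t^c=t_1^{c_1}\cdots t_s^{c_s}$, and $I(\mathcal{L})=(\{t^{a^+}-t^{a^-}: a\in\mathcal{L}\})$. The reverse lexicographical order on monomials is: $t^b\succ t^a$ iff the last nonzero entry of $b-a$ is negative. The initial ideal ${\rm in}(L)$ is generated by the leading terms of the polynomials of $L$. $T(M)$ denotes the torsion subgroup of $M$. *)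

theory Defs
  imports Main "HOL-Library.Poly_Mapping"
begin

text \<open>Indices are 0-based: the variables t_1..t_s of the paper are
  indexed 0..s-1 here. Integer vectors of Z^s are functions nat => int vanishing
  at indices >= s. Exponent vectors are finitely supported maps nat =>0 nat,
  and polynomials of K[t_1..t_s] are elements of (nat =>0 nat) =>0 K
  whose monomials only involve variables 0..s-1.\<close>

definition Zs :: "nat \<Rightarrow> (nat \<Rightarrow> int) set" where
  "Zs s = {a. \<forall>i\<ge>s. a i = 0}"

definition is_lattice :: "nat \<Rightarrow> (nat \<Rightarrow> int) set \<Rightarrow> bool" where
  "is_lattice s L \<longleftrightarrow> L \<subseteq> Zs s \<and> (\<lambda>_. 0) \<in> L \<and>
     (\<forall>a\<in>L. \<forall>b\<in>L. (\<lambda>i. a i + b i) \<in> L) \<and> (\<forall>a\<in>L. (\<lambda>i. - a i) \<in> L)"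

definition homogeneous_lattice :: "nat \<Rightarrow> (nat \<Rightarrow> int) set \<Rightarrow> bool" where
  "homogeneous_lattice s L \<longleftrightarrow> (\<forall>a\<in>L. (\<Sum>i<s. a i) = 0)"

definition int_lin_indep :: "nat \<Rightarrow> (nat \<Rightarrow> int) list \<Rightarrow> bool" where
  "int_lin_indep s vs \<longleftrightarrow>
     (\<forall>c :: nat \<Rightarrow> int. (\<forall>i<s. (\<Sum>j<length vs. c j * (vs ! j) i) = 0)
        \<longrightarrow> (\<forall>j<length vs. c j = 0))"

definition lattice_rank_eq :: "nat \<Rightarrow> (nat \<Rightarrow> int) set \<Rightarrow> nat \<Rightarrow> bool" where
  "lattice_rank_eq s L r \<longleftrightarrow>
     (\<exists>vs. length vs = r \<and> set vs \<subseteq> L \<and> int_lin_indep s vs) \<and>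
     (\<forall>vs. set vs \<subseteq> L \<and> int_lin_indep s vs \<longrightarrow> length vs \<le> r)"

definition pos_part :: "nat \<Rightarrow> (nat \<Rightarrow> int) \<Rightarrow> nat \<Rightarrow>\<^sub>0 nat" where
  "pos_part s a = Abs_poly_mapping (\<lambda>i. if i < s then nat (a i) else 0)"

definition neg_part :: "nat \<Rightarrow> (nat \<Rightarrow> int) \<Rightarrow> nat \<Rightarrow>\<^sub>0 nat" where
  "neg_part s a = Abs_poly_mapping (\<lambda>i. if i < s then nat (- a i) else 0)"

definition monomial_t :: "(nat \<Rightarrow>\<^sub>0 nat) \<Rightarrow> (nat \<Rightarrow>\<^sub>0 nat) \<Rightarrow>\<^sub>0 'k::field" where
  "monomial_t e = Poly_Mapping.single e 1"

definition polyring :: "nat \<Rightarrow> ((nat \<Rightarrow>\<^sub>0 nat) \<Rightarrow>\<^sub>0 'k::field) set" where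
  "polyring s = {f :: (nat \<Rightarrow>\<^sub>0 nat) \<Rightarrow>\<^sub>0 'k. \<forall>e \<in> Poly_Mapping.keys f. \<forall>i \<in> Poly_Mapping.keys e. i < s}"

definition ideal_gen :: "nat \<Rightarrow> ((nat \<Rightarrow>\<^sub>0 nat) \<Rightarrow>\<^sub>0 'k::field) set
    \<Rightarrow> ((nat \<Rightarrow>\<^sub>0 nat) \<Rightarrow>\<^sub>0 'k) set" where
  "ideal_gen s G = {f. \<exists>F c. finite F \<and> F \<subseteq> G \<and> (\<forall>g\<in>F. c g \<in> polyring s) \<and>
                         f = (\<Sum>g\<in>F. c g * g)}"

definition lattice_ideal :: "nat \<Rightarrow> (nat \<Rightarrow> int) set \<Rightarrow> ((nat \<Rightarrow>\<^sub>0 nat) \<Rightarrow>\<^sub>0 'k::field) set" where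
  "lattice_ideal s L = ideal_gen s {monomial_t (pos_part s a) - monomial_t (neg_part s a) | a. a \<in> L}"

definition revlex_gt :: "nat \<Rightarrow> (nat \<Rightarrow>\<^sub>0 nat) \<Rightarrow> (nat \<Rightarrow>\<^sub>0 nat) \<Rightarrow> bool" where
  "revlex_gt s b a \<longleftrightarrow> (\<exists>j<s. Poly_Mapping.lookup b j < Poly_Mapping.lookup a j \<and>
       (\<forall>i. j < i \<and> i < s \<longrightarrow> Poly_Mapping.lookup b i = Poly_Mapping.lookup a i))"

definition lead_exp :: "nat \<Rightarrow> ((nat \<Rightarrow>\<^sub>0 nat) \<Rightarrow>\<^sub>0 'k::field) \<Rightarrow> nat \<Rightarrow>\<^sub>0 nat" where
  "lead_exp s f = (THE e. e \<in> Poly_Mapping.keys f \<and> (\<forall>e'\<in>Poly_Mapping.keys f. e' \<noteq> e \<longrightarrow> revlex_gt s e e'))"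

definition initial_ideal :: "nat \<Rightarrow> ((nat \<Rightarrow>\<^sub>0 nat) \<Rightarrow>\<^sub>0 'k::field) set
    \<Rightarrow> ((nat \<Rightarrow>\<^sub>0 nat) \<Rightarrow>\<^sub>0 'k) set" where
  "initial_ideal s J = ideal_gen s {monomial_t (lead_exp s f) | f. f \<in> J \<and> f \<noteq> 0}"

end

theory Submission
  imports Defs
begin



lemma lat_zero: "is_lattice s L \<Longrightarrow> (\<lambda>_. 0) \<in> L" by (simp add: is_lattice_def)
lemma lat_add: "is_lattice s L \<Longrightarrow> a \<in> L \<Longrightarrow> b \<in> L \<Longrightarrow> (\<lambda>i. a i + b i) \<in> L"
  by (simp add: is_lattice_def)
lemma lat_neg: "is_lattice s L \<Longrightarrow> a \<in> L \<Longrightarrow> (\<lambda>i. - a i) \<in> L"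
  by (simp add: is_lattice_def)
lemma lat_diff: "is_lattice s L \<Longrightarrow> a \<in> L \<Longrightarrow> b \<in> L \<Longrightarrow> (\<lambda>i. a i - b i) \<in> L"
  using lat_add[of s L a "\<lambda>i. - b i"] lat_neg[of s L b] by simp
lemma lat_Zs: "is_lattice s L \<Longrightarrow> a \<in> L \<Longrightarrow> i \<ge> s \<Longrightarrow> a i = 0"
  by (auto simp: is_lattice_def Zs_def)

lemma lat_smult_nat: "is_lattice s L \<Longrightarrow> a \<in> L \<Longrightarrow> (\<lambda>i. int k * a i) \<in> L"
proof (induction k)
  case 0 then show ?case using lat_zero by simp
next
  case (Suc k)
  then have "(\<lambda>i. int k * a i + a i) \<in> L" using lat_add[of s L "\<lambda>i. int k * a i" a] by simp
  then show ?case by (simp add: algebra_simps)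
qed

lemma lat_smult: assumes "is_lattice s L" "a \<in> L" shows "(\<lambda>i. k * a i) \<in> L"
proof (cases "k \<ge> 0")
  case True
  then show ?thesis using lat_smult_nat[OF assms, of "nat k"] by simp
next
  case False
  then have "(\<lambda>i. - (int (nat (-k)) * a i)) \<in> L"
    using lat_neg[OF assms(1) lat_smult_nat[OF assms, of "nat (-k)"]] by simp
  then show ?thesis using False by simp
qed

lemma lat_sum: assumes "is_lattice s L" "finite A" "\<And>j. j \<in> A \<Longrightarrow> f j \<in> L"
  shows "(\<lambda>i. \<Sum>j\<in>A. f j i) \<in> L"
  using assms(2,3)
proof (induction A rule: finite_induct)
  case empty then show ?case using lat_zero[OF assms(1)] by simp
next
  case (insert x F)
  then show ?case using lat_add[OF assms(1), of "f x" "\<lambda>i. \<Sum>j\<in>F. f j i"] by simp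
qed

lemma int_dep:
  "finite J \<Longrightarrow> card J > n \<Longrightarrow> (\<forall>j\<in>J. \<forall>i\<ge>n. v j i = (0::int)) \<Longrightarrow>
    \<exists>c. (\<exists>j\<in>J. c j \<noteq> 0) \<and> (\<forall>i. (\<Sum>j\<in>J. c j * v j i) = 0)"
proof (induction n arbitrary: J v)
  case 0
  then obtain j0 where "j0 \<in> J" by fastforce
  then show ?case using 0 by (intro exI[of _ "\<lambda>j. if j = j0 then 1 else 0"]) auto
next
  case (Suc n)
  show ?case
  proof (cases "\<forall>j\<in>J. v j n = 0")
    case True
    then have "\<forall>j\<in>J. \<forall>i\<ge>n. v j i = 0" using Suc.prems(3)
      by (metis Suc_leI le_neq_implies_less)
    then show ?thesis using Suc.IH[of J v] Suc.prems by simp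
  next
    case False
    then obtain k where k: "k \<in> J" "v k n \<noteq> 0" by auto
    define p where "p = v k n"
    define J' where "J' = J - {k}"
    define w where "w j i = p * v j i - v j n * v k i" for j i
    have "card J' > n" using Suc.prems k by (simp add: J'_def)
    moreover have "\<forall>j\<in>J'. \<forall>i\<ge>n. w j i = 0"
    proof (intro ballI allI impI)
      fix j i assume "j \<in> J'" "n \<le> i"
      show "w j i = 0"
      proof (cases "i = n")
        case True then show ?thesis by (simp add: w_def p_def)
      next
        case False then have "i \<ge> Suc n" using \<open>n \<le> i\<close> by simp
        then show ?thesis using Suc.prems(3) \<open>j \<in> J'\<close> k by (simp add: w_def J'_def)
      qed
    qed
    moreover have "finite J'" using Suc.prems by (simp add: J'_def)
    ultimately obtain c' where c': "\<exists>j\<in>J'. c' j \<noteq> 0" "\<forall>i. (\<Sum>j\<in>J'. c' j * w j i) = 0"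
      using Suc.IH[of J' w] by blast
    define c where "c j = (if j = k then - (\<Sum>j\<in>J'. c' j * v j n) else p * c' j)" for j
    have "\<exists>j\<in>J. c j \<noteq> 0"
      using c'(1) k by (auto simp: c_def J'_def p_def)
    moreover have "(\<Sum>j\<in>J. c j * v j i) = 0" for i
    proof -
      have "(\<Sum>j\<in>J. c j * v j i) = c k * v k i + (\<Sum>j\<in>J'. c j * v j i)"
        using k Suc.prems(1) by (simp add: J'_def sum.remove)
      also have "(\<Sum>j\<in>J'. c j * v j i) = (\<Sum>j\<in>J'. p * c' j * v j i)"
        by (rule sum.cong) (auto simp: c_def J'_def)
      also have "c k * v k i = - (\<Sum>j\<in>J'. c' j * v j n * v k i)"
        by (simp add: c_def sum_distrib_right)
      finally have "(\<Sum>j\<in>J. c j * v j i) = (\<Sum>j\<in>J'. c' j * w j i)"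
        by (simp add: w_def algebra_simps sum_subtractf sum_negf)
      then show ?thesis using c'(2) by simp
    qed
    ultimately show ?thesis by blast
  qed
qed

lemma finite_index:
  assumes s2: "s \<ge> 2" and lat: "is_lattice s L" and hom: "homogeneous_lattice s L"
    and rk: "lattice_rank_eq s L (s - 1)" and hZ: "h \<in> Zs s" and hs: "(\<Sum>i<s. h i) = 0"
  shows "\<exists>m::int. m > 0 \<and> (\<lambda>i. m * h i) \<in> L"
proof -
  obtain vs where vs: "length vs = s - 1" "set vs \<subseteq> L" "int_lin_indep s vs"
    using rk by (auto simp: lattice_rank_eq_def)
  define v where "v j = (if j < s - 1 then vs ! j else h)" for j
  define u where "u j i = (if i < s - 1 then v j i else 0)" for j i
  have vL: "j < s - 1 \<Longrightarrow> v j \<in> L" for j using vs by (auto simp: v_def)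
  have vZ: "j < s \<Longrightarrow> i \<ge> s \<Longrightarrow> v j i = 0" for j i
    using vL lat_Zs[OF lat] hZ by (cases "j < s - 1") (auto simp: v_def Zs_def)
  have vsum: "j < s \<Longrightarrow> (\<Sum>i<s. v j i) = 0" for j
    using vL hom hs by (cases "j < s - 1") (auto simp: v_def homogeneous_lattice_def)
  obtain c where c: "\<exists>j\<in>{..<s}. c j \<noteq> 0" "\<forall>i. (\<Sum>j\<in>{..<s}. c j * u j i) = 0"
    using int_dep[of "{..<s}" "s - 1" u] s2 by (auto simp: u_def)
  have sS: "{..<s} = insert (s - 1) {..<s - 1}" using s2 by auto
  define T where "T i = (\<Sum>j<s. c j * v j i)" for i
  have T1: "i < s - 1 \<Longrightarrow> T i = 0" for i using c(2)[rule_format, of i] by (simp add: T_def u_def)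
  have T2: "i \<ge> s \<Longrightarrow> T i = 0" for i using vZ by (simp add: T_def)
  have "(\<Sum>i<s. T i) = (\<Sum>j<s. c j * (\<Sum>i<s. v j i))"
    unfolding T_def sum_distrib_left by (rule sum.swap)
  also have "\<dots> = 0" using vsum by simp
  finally have "(\<Sum>i<s. T i) = 0" .
  moreover have "(\<Sum>i<s. T i) = T (s - 1) + (\<Sum>i<s - 1. T i)"
    unfolding sS by simp
  ultimately have "T (s - 1) = 0" using T1 by simp
  then have T0: "T i = 0" for i using T1 T2
    by (cases "i < s - 1"; cases "i = s - 1") auto
  have Tsplit: "T i = (\<Sum>j<s - 1. c j * (vs ! j) i) + c (s - 1) * h i" for i
  proof -
    have "T i = (\<Sum>j<s - 1. c j * v j i) + c (s - 1) * v (s - 1) i"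
      unfolding T_def sS by simp
    then show ?thesis by (simp add: v_def)
  qed
  have cnz: "c (s - 1) \<noteq> 0"
  proof
    assume c0: "c (s - 1) = 0"
    then have "\<forall>i<s. (\<Sum>j<length vs. c j * (vs ! j) i) = 0" using T0 Tsplit vs(1) by simp
    then have "\<forall>j<s - 1. c j = 0" using vs by (auto simp: int_lin_indep_def)
    then show False using c(1) c0 sS by auto
  qed
  have "(\<lambda>i. c (s - 1) * h i) = (\<lambda>i. - (\<Sum>j\<in>{..<s - 1}. c j * (vs ! j) i))"
  proof
    fix i show "c (s - 1) * h i = - (\<Sum>j\<in>{..<s - 1}. c j * (vs ! j) i)"
      using T0[of i] Tsplit[of i] by simp
  qed
  also have "\<dots> \<in> L"
    apply (rule lat_neg[OF lat])
    apply (rule lat_sum[OF lat, of _ "\<lambda>j i. c j * (vs ! j) i", simplified])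
     apply simp
    apply (rule lat_smult[OF lat]) using vs by auto
  finally have "(\<lambda>i. c (s - 1) * (c (s - 1) * h i)) \<in> L" by (rule lat_smult[OF lat])
  then show ?thesis using cnz
    by (intro exI[of _ "c (s - 1) * c (s - 1)"]) (auto simp: mult.assoc zero_less_mult_iff linorder_neq_iff)
qed



definition supp_lt :: "nat \<Rightarrow> (nat \<Rightarrow>\<^sub>0 nat) \<Rightarrow> bool" where
  "supp_lt s e \<longleftrightarrow> (\<forall>i\<ge>s. Poly_Mapping.lookup e i = 0)"

definition mk :: "nat \<Rightarrow> (nat \<Rightarrow> nat) \<Rightarrow> nat \<Rightarrow>\<^sub>0 nat" where
  "mk s f = Abs_poly_mapping (\<lambda>i. if i < s then f i else 0)"

lemma lookup_mk: "Poly_Mapping.lookup (mk s f) i = (if i < s then f i else 0)"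
proof -
  have "finite {i. (if i < s then f i else 0) \<noteq> 0}"
    by (rule finite_subset[of _ "{..<s}"]) auto
  then show ?thesis by (simp add: mk_def)
qed

lemma supp_lt_mk: "supp_lt s (mk s f)" by (simp add: supp_lt_def lookup_mk)

lemma lookup_pos: "Poly_Mapping.lookup (pos_part s a) i = (if i < s then nat (a i) else 0)"
  using lookup_mk[of s "\<lambda>i. nat (a i)"] by (simp add: mk_def pos_part_def)
lemma lookup_neg: "Poly_Mapping.lookup (neg_part s a) i = (if i < s then nat (- a i) else 0)"
  using lookup_mk[of s "\<lambda>i. nat (- a i)"] by (simp add: mk_def neg_part_def)

definition vrel :: "(nat \<Rightarrow> int) set \<Rightarrow> (nat \<Rightarrow>\<^sub>0 nat) \<Rightarrow> (nat \<Rightarrow>\<^sub>0 nat) \<Rightarrow> bool" where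
  "vrel L x y \<longleftrightarrow> (\<lambda>i. int (Poly_Mapping.lookup x i) - int (Poly_Mapping.lookup y i)) \<in> L"

lemma vrel_refl: "is_lattice s L \<Longrightarrow> vrel L x x"
  using lat_zero by (simp add: vrel_def)
lemma vrel_sym: "is_lattice s L \<Longrightarrow> vrel L x y \<Longrightarrow> vrel L y x"
  using lat_neg[of s L "\<lambda>i. int (Poly_Mapping.lookup x i) - int (Poly_Mapping.lookup y i)"]
  by (simp add: vrel_def)
lemma vrel_trans: "is_lattice s L \<Longrightarrow> vrel L x y \<Longrightarrow> vrel L y z \<Longrightarrow> vrel L x z"
  using lat_add[of s L "\<lambda>i. int (Poly_Mapping.lookup x i) - int (Poly_Mapping.lookup y i)"
     "\<lambda>i. int (Poly_Mapping.lookup y i) - int (Poly_Mapping.lookup z i)"]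
  by (simp add: vrel_def)

lemma vrel_shift: "vrel L (x + r) (y + r) \<longleftrightarrow> vrel L x y"
  by (simp add: vrel_def lookup_add)

subsection \<open>revlex\<close>

lemma rl_irrefl: "\<not> revlex_gt s e e" by (simp add: revlex_gt_def)

lemma rl_asym: assumes "revlex_gt s a b" shows "\<not> revlex_gt s b a"
proof
  assume "revlex_gt s b a"
  then obtain k where k: "k < s" "Poly_Mapping.lookup b k < Poly_Mapping.lookup a k"
    "\<forall>i. k < i \<and> i < s \<longrightarrow> Poly_Mapping.lookup b i = Poly_Mapping.lookup a i"
    by (auto simp: revlex_gt_def)
  obtain j where j: "j < s" "Poly_Mapping.lookup a j < Poly_Mapping.lookup b j"
    "\<forall>i. j < i \<and> i < s \<longrightarrow> Poly_Mapping.lookup a i = Poly_Mapping.lookup b i"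
    using assms by (auto simp: revlex_gt_def)
  show False
  proof (cases j k rule: linorder_cases)
    case less
    then have "Poly_Mapping.lookup a k = Poly_Mapping.lookup b k" using j(3) k(1) by blast
    then show False using k(2) by simp
  next
    case equal then show False using j(2) k(2) by simp
  next
    case greater
    then have "Poly_Mapping.lookup b j = Poly_Mapping.lookup a j" using k(3) j(1) by blast
    then show False using j(2) by simp
  qed
qed

lemma rl_trans: assumes "revlex_gt s a b" "revlex_gt s b c" shows "revlex_gt s a c"
proof -
  obtain j where j: "j < s" "Poly_Mapping.lookup a j < Poly_Mapping.lookup b j"
    "\<forall>i. j < i \<and> i < s \<longrightarrow> Poly_Mapping.lookup a i = Poly_Mapping.lookup b i"
    using assms by (auto simp: revlex_gt_def)
  obtain k where k: "k < s" "Poly_Mapping.lookup b k < Poly_Mapping.lookup c k"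
    "\<forall>i. k < i \<and> i < s \<longrightarrow> Poly_Mapping.lookup b i = Poly_Mapping.lookup c i"
    using assms by (auto simp: revlex_gt_def)
  show ?thesis
  proof (cases j k rule: linorder_cases)
    case less
    have "Poly_Mapping.lookup a k = Poly_Mapping.lookup b k" using j(3) less k(1) by blast
    moreover have "\<forall>i. k < i \<and> i < s \<longrightarrow> Poly_Mapping.lookup a i = Poly_Mapping.lookup c i"
      using j(3) k(3) less by force
    ultimately show ?thesis using k(1,2) unfolding revlex_gt_def by (intro exI[of _ k]) simp
  next
    case equal
    have "\<forall>i. k < i \<and> i < s \<longrightarrow> Poly_Mapping.lookup a i = Poly_Mapping.lookup c i"
      using j(3) k(3) equal by force
    moreover have "Poly_Mapping.lookup a k < Poly_Mapping.lookup c k" using j(2) k(2) equal by simp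
    ultimately show ?thesis using k(1) unfolding revlex_gt_def by (intro exI[of _ k]) simp
  next
    case greater
    have "Poly_Mapping.lookup b j = Poly_Mapping.lookup c j" using k(3) greater j(1) by blast
    moreover have "\<forall>i. j < i \<and> i < s \<longrightarrow> Poly_Mapping.lookup a i = Poly_Mapping.lookup c i"
      using j(3) k(3) greater by force
    ultimately show ?thesis using j(1,2) unfolding revlex_gt_def by (intro exI[of _ j]) simp
  qed
qed

lemma rl_total: assumes "supp_lt s a" "supp_lt s b" "a \<noteq> b"
  shows "revlex_gt s a b \<or> revlex_gt s b a"
proof -
  have "\<exists>k. Poly_Mapping.lookup a k \<noteq> Poly_Mapping.lookup b k"
  proof (rule ccontr)
    assume "\<not> ?thesis"
    then have "\<And>k. Poly_Mapping.lookup a k = Poly_Mapping.lookup b k" by blast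
    then have "a = b" by (rule poly_mapping_eqI)
    then show False using assms(3) by simp
  qed
  then obtain k where "Poly_Mapping.lookup a k \<noteq> Poly_Mapping.lookup b k" by blast
  then have k: "k < s \<and> Poly_Mapping.lookup a k \<noteq> Poly_Mapping.lookup b k"
  proof -
    have "k < s"
    proof (rule ccontr)
      assume "\<not> k < s"
      then show False using assms(1,2) \<open>Poly_Mapping.lookup a k \<noteq> Poly_Mapping.lookup b k\<close>
        unfolding supp_lt_def by simp
    qed
    then show ?thesis using \<open>Poly_Mapping.lookup a k \<noteq> Poly_Mapping.lookup b k\<close> by simp
  qed
  define P where "P j \<longleftrightarrow> j < s \<and> Poly_Mapping.lookup a j \<noteq> Poly_Mapping.lookup b j" for j
  define j where "j = (GREATEST j. P j)"
  have bnd: "\<forall>y. P y \<longrightarrow> y \<le> s" by (auto simp: P_def)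
  have Pj: "P j" unfolding j_def using k bnd by (intro GreatestI_nat[of P k s]) (auto simp: P_def)
  have above: "j < i \<Longrightarrow> i < s \<Longrightarrow> Poly_Mapping.lookup a i = Poly_Mapping.lookup b i" for i
  proof (rule ccontr)
    assume "j < i" "i < s" "Poly_Mapping.lookup a i \<noteq> Poly_Mapping.lookup b i"
    then have "P i" by (simp add: P_def)
    then have "i \<le> j" unfolding j_def using bnd by (intro Greatest_le_nat[of P i s]) auto
    then show False using \<open>j < i\<close> by simp
  qed
  show ?thesis
  proof (cases "Poly_Mapping.lookup a j < Poly_Mapping.lookup b j")
    case True
    then have "revlex_gt s a b" using Pj above unfolding revlex_gt_def P_def
      by (intro exI[of _ j]) auto
    then show ?thesis by simp
  next
    case False
    then have "Poly_Mapping.lookup b j < Poly_Mapping.lookup a j" using Pj by (simp add: P_def)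
    then have "revlex_gt s b a" using Pj above unfolding revlex_gt_def P_def
      by (intro exI[of _ j]) auto
    then show ?thesis by simp
  qed
qed

lemma rl_shift: "revlex_gt s (a + r) (b + r) \<longleftrightarrow> revlex_gt s a b"
  by (simp add: revlex_gt_def lookup_add)

lemma finite_max:
  "finite S \<Longrightarrow> S \<noteq> {} \<Longrightarrow> (\<forall>x\<in>S.\<forall>y\<in>S.\<forall>z\<in>S. R x y \<longrightarrow> R y z \<longrightarrow> R x z) \<Longrightarrow>
   (\<forall>x\<in>S. \<forall>y\<in>S. x \<noteq> y \<longrightarrow> R x y \<or> R y x) \<Longrightarrow> \<exists>x\<in>S. \<forall>y\<in>S. y \<noteq> x \<longrightarrow> R x y"
proof (induction S rule: finite_ne_induct)
  case (singleton x) then show ?case by auto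
next
  case (insert x F)
  have "\<exists>m\<in>F. \<forall>y\<in>F. y \<noteq> m \<longrightarrow> R m y"
    apply (rule insert.IH)
    using insert.prems(1) apply (simp only: Ball_def insert_iff) apply meson
    using insert.prems(2) apply (simp only: Ball_def insert_iff) apply meson done
  then obtain m where m: "m \<in> F" "\<forall>y\<in>F. y \<noteq> m \<longrightarrow> R m y" by blast
  have "x \<noteq> m" using insert.hyps m(1) by blast
  show ?case
  proof (cases "R x m")
    case True
    have "R x y" if "y \<in> insert x F" "y \<noteq> x" for y
    proof (cases "y = m")
      case True then show ?thesis using \<open>R x m\<close> by simp
    next
      case False
      then have "R m y" using m that by auto
      moreover have "x \<in> insert x F" "m \<in> insert x F" using m by auto
      ultimately show ?thesis using insert.prems(1)[rule_format, of x m y] \<open>R x m\<close> that(1) by simp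
    qed
    then show ?thesis by blast
  next
    case False
    then have "R m x" using insert.prems(2)[rule_format, of x m] m \<open>x \<noteq> m\<close> by simp
    then show ?thesis using m by (intro bexI[of _ m]) auto
  qed
qed




lemma polyring_keys: assumes "f \<in> polyring s" "e \<in> Poly_Mapping.keys f" shows "supp_lt s e"
  unfolding supp_lt_def
proof (intro allI impI)
  fix i assume "s \<le> i"
  show "Poly_Mapping.lookup e i = 0"
  proof (rule ccontr)
    assume "Poly_Mapping.lookup e i \<noteq> 0"
    then have "i \<in> Poly_Mapping.keys e" by (simp add: in_keys_iff)
    then have "i < s" using assms by (auto simp: polyring_def)
    then show False using \<open>s \<le> i\<close> by simp
  qed
qed

lemma polyringI: assumes "\<And>e. e \<in> Poly_Mapping.keys f \<Longrightarrow> supp_lt s e" shows "f \<in> polyring s"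
  unfolding polyring_def
proof (intro CollectI ballI)
  fix e i assume "e \<in> Poly_Mapping.keys f" "i \<in> Poly_Mapping.keys e"
  show "i < s"
  proof (rule ccontr)
    assume "\<not> i < s"
    then have "Poly_Mapping.lookup e i = 0" using assms[OF \<open>e \<in> _\<close>] by (simp add: supp_lt_def)
    then show False using \<open>i \<in> Poly_Mapping.keys e\<close> by (simp add: in_keys_iff)
  qed
qed

lemma supp_lt_add: "supp_lt s a \<Longrightarrow> supp_lt s b \<Longrightarrow> supp_lt s (a + b)"
  by (simp add: supp_lt_def lookup_add)

lemma polyring_add: "f \<in> polyring s \<Longrightarrow> g \<in> polyring s \<Longrightarrow> f + g \<in> polyring s"
  apply (rule polyringI)
  using keys_add[of f g] polyring_keys by blast

lemma polyring_diff: "f \<in> polyring s \<Longrightarrow> g \<in> polyring s \<Longrightarrow> f - g \<in> polyring s"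
  apply (rule polyringI)
  using keys_diff[of f g] polyring_keys by blast

lemma polyring_mult: "f \<in> polyring s \<Longrightarrow> g \<in> polyring s \<Longrightarrow> f * g \<in> polyring s"
  apply (rule polyringI)
  using keys_mult[of f g] polyring_keys supp_lt_add by blast

lemma polyring_zero: "0 \<in> polyring s" by (simp add: polyring_def)

lemma polyring_sum: "finite A \<Longrightarrow> (\<And>x. x \<in> A \<Longrightarrow> f x \<in> polyring s) \<Longrightarrow> (\<Sum>x\<in>A. f x) \<in> polyring s"
  by (induction A rule: finite_induct) (auto intro: polyring_add polyring_zero)

lemma polyring_monomial: "supp_lt s e \<Longrightarrow> (monomial_t e :: _ \<Rightarrow>\<^sub>0 'k::field) \<in> polyring s"
  by (rule polyringI) (simp add: monomial_t_def)

lemma supp_lt_pos: "supp_lt s (pos_part s a)" by (simp add: supp_lt_def lookup_pos)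
lemma supp_lt_neg: "supp_lt s (neg_part s a)" by (simp add: supp_lt_def lookup_neg)

lemma polyring_one: "(1 :: (nat \<Rightarrow>\<^sub>0 nat) \<Rightarrow>\<^sub>0 'k::field) \<in> polyring s"
  by (rule polyringI) (simp add: supp_lt_def)

lemma ideal_gen_polyring:
  assumes "G \<subseteq> polyring s" shows "ideal_gen s G \<subseteq> polyring s"
proof
  fix f assume "f \<in> ideal_gen s G"
  then obtain F c where "finite F" "F \<subseteq> G" "\<forall>g\<in>F. c g \<in> polyring s" "f = (\<Sum>g\<in>F. c g * g)"
    by (auto simp: ideal_gen_def)
  then show "f \<in> polyring s" using assms by (auto intro!: polyring_sum polyring_mult)
qed

lemma lattice_ideal_polyring: "lattice_ideal s L \<subseteq> polyring s"
  unfolding lattice_ideal_def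
  by (rule ideal_gen_polyring)
     (auto intro!: polyring_diff polyring_monomial supp_lt_pos supp_lt_neg)

subsection \<open>Linear functional on a class\<close>

definition Phi :: "((nat \<Rightarrow>\<^sub>0 nat) \<Rightarrow> bool) \<Rightarrow> ((nat \<Rightarrow>\<^sub>0 nat) \<Rightarrow>\<^sub>0 'k::field) \<Rightarrow> 'k" where
  "Phi P h = (\<Sum>e\<in>{e\<in>Poly_Mapping.keys h. P e}. Poly_Mapping.lookup h e)"

lemma Phi_S: assumes "finite S" "Poly_Mapping.keys h \<subseteq> S"
  shows "Phi P h = (\<Sum>e\<in>{e\<in>S. P e}. Poly_Mapping.lookup h e)"
  unfolding Phi_def
  apply (rule sum.mono_neutral_left)
  using assms by (auto simp: in_keys_iff)

lemma Phi_add: "Phi P (f + g) = Phi P f + Phi P g"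
proof -
  let ?S = "Poly_Mapping.keys f \<union> Poly_Mapping.keys g"
  have "Phi P (f + g) = (\<Sum>e\<in>{e\<in>?S. P e}. Poly_Mapping.lookup (f + g) e)"
    by (rule Phi_S) (auto simp: keys_add)
  moreover have "Phi P f = (\<Sum>e\<in>{e\<in>?S. P e}. Poly_Mapping.lookup f e)" by (rule Phi_S) auto
  moreover have "Phi P g = (\<Sum>e\<in>{e\<in>?S. P e}. Poly_Mapping.lookup g e)" by (rule Phi_S) auto
  ultimately show ?thesis by (simp add: lookup_add sum.distrib)
qed

lemma Phi_zero: "Phi P 0 = 0" by (simp add: Phi_def)

lemma Phi_diff: "Phi P (f - g) = Phi P f - Phi P g"
  using Phi_add[of P "f - g" g] by simp

lemma Phi_single: "Phi P (Poly_Mapping.single k v) = (if P k then v else 0)"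
proof -
  have "Phi P (Poly_Mapping.single k v) = (\<Sum>e\<in>{e\<in>{k}. P e}. Poly_Mapping.lookup (Poly_Mapping.single k v) e)"
    by (rule Phi_S) auto
  also have "{e\<in>{k}. P e} = (if P k then {k} else {})" by auto
  finally show ?thesis by simp
qed

lemma Phi_sum: "finite A \<Longrightarrow> Phi P (\<Sum>x\<in>A. f x) = (\<Sum>x\<in>A. Phi P (f x))"
  by (induction A rule: finite_induct) (auto simp: Phi_zero Phi_add)

lemma update_eq: "a \<notin> Poly_Mapping.keys f \<Longrightarrow> Poly_Mapping.update a b f = f + Poly_Mapping.single a b"
  by (rule poly_mapping_eqI) (auto simp: lookup_update lookup_add lookup_single in_keys_iff)

lemma Phi_mult_gen:
  fixes h :: "(nat \<Rightarrow>\<^sub>0 nat) \<Rightarrow>\<^sub>0 'k::field"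
  assumes resp: "\<And>m. P (m + p) = P (m + q)"
  shows "Phi P (h * (monomial_t p - monomial_t q)) = 0"
proof (induction h rule: update_induct)
  case const then show ?case by (simp add: Phi_zero)
next
  case (update f a b)
  have "Phi P (Poly_Mapping.single a b * (monomial_t p - monomial_t q)) = 0"
    using resp[of a] by (simp add: monomial_t_def right_diff_distrib mult_single Phi_diff Phi_single)
  then show ?case using update by (simp add: update_eq distrib_right Phi_add)
qed




lemma vrel_binom:
  assumes "a \<in> Zs s"
  shows "vrel L (m + pos_part s a) (m + neg_part s a) \<longleftrightarrow> a \<in> L"
proof -
  have "(\<lambda>i. int (Poly_Mapping.lookup (m + pos_part s a) i) - int (Poly_Mapping.lookup (m + neg_part s a) i)) = a"
  proof
    fix i show "int (Poly_Mapping.lookup (m + pos_part s a) i) - int (Poly_Mapping.lookup (m + neg_part s a) i) = a i"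
      using assms by (auto simp: lookup_add lookup_pos lookup_neg Zs_def)
  qed
  then show ?thesis by (simp add: vrel_def)
qed

lemma fiber_sum:
  fixes f :: "(nat \<Rightarrow>\<^sub>0 nat) \<Rightarrow>\<^sub>0 'k::field"
  assumes lat: "is_lattice s L" and f: "f \<in> lattice_ideal s L"
  shows "Phi (\<lambda>e'. vrel L e' e) f = 0"
proof -
  obtain F c where F: "finite F" "F \<subseteq> {monomial_t (pos_part s a) - monomial_t (neg_part s a) | a. a \<in> L}"
    "f = (\<Sum>g\<in>F. c g * g)"
    using f by (auto simp: lattice_ideal_def ideal_gen_def)
  have "Phi (\<lambda>e'. vrel L e' e) (c g * g) = 0" if gF: "g \<in> F" for g
  proof -
    obtain a where a: "a \<in> L" "g = monomial_t (pos_part s a) - monomial_t (neg_part s a)"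
      using F(2) gF by blast
    have aZ: "a \<in> Zs s" using a(1) lat by (auto simp: is_lattice_def)
    have "vrel L e' e = vrel L e'' e" if "vrel L e' e''" for e' e''
      using that vrel_trans[OF lat] vrel_sym[OF lat] by blast
    moreover have "vrel L (m + pos_part s a) (m + neg_part s a)" for m
      using vrel_binom[OF aZ] a(1) by simp
    ultimately have "vrel L (m + pos_part s a) e = vrel L (m + neg_part s a) e" for m
      by blast
    then show ?thesis unfolding a(2) by (rule Phi_mult_gen)
  qed
  then show ?thesis using F by (simp add: Phi_sum)
qed

lemma lead_props:
  fixes f :: "(nat \<Rightarrow>\<^sub>0 nat) \<Rightarrow>\<^sub>0 'k::field"
  assumes "f \<in> polyring s" "f \<noteq> 0"
  shows "lead_exp s f \<in> Poly_Mapping.keys f \<and>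
    (\<forall>e'\<in>Poly_Mapping.keys f. e' \<noteq> lead_exp s f \<longrightarrow> revlex_gt s (lead_exp s f) e')"
proof -
  let ?S = "Poly_Mapping.keys f"
  have "\<exists>x\<in>?S. \<forall>y\<in>?S. y \<noteq> x \<longrightarrow> revlex_gt s x y"
  proof (rule finite_max)
    show "finite ?S" by simp
    show "?S \<noteq> {}" using assms(2) by simp
    show "\<forall>x\<in>?S. \<forall>y\<in>?S. \<forall>z\<in>?S. revlex_gt s x y \<longrightarrow> revlex_gt s y z \<longrightarrow> revlex_gt s x z"
      using rl_trans by blast
    show "\<forall>x\<in>?S. \<forall>y\<in>?S. x \<noteq> y \<longrightarrow> revlex_gt s x y \<or> revlex_gt s y x"
      using rl_total polyring_keys[OF assms(1)] by blast
  qed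
  then obtain x where x: "x \<in> ?S" "\<forall>y\<in>?S. y \<noteq> x \<longrightarrow> revlex_gt s x y" by blast
  have "lead_exp s f = x"
    unfolding lead_exp_def
  proof (rule the_equality)
    show "x \<in> ?S \<and> (\<forall>e'\<in>?S. e' \<noteq> x \<longrightarrow> revlex_gt s x e')" using x by blast
    fix e assume e: "e \<in> ?S \<and> (\<forall>e'\<in>?S. e' \<noteq> e \<longrightarrow> revlex_gt s e e')"
    show "e = x"
    proof (rule ccontr)
      assume "e \<noteq> x"
      then have "revlex_gt s e x" "revlex_gt s x e" using e x by auto
      then show False using rl_asym by blast
    qed
  qed
  then show ?thesis using x by simp
qed

lemma lead_below:
  fixes f :: "(nat \<Rightarrow>\<^sub>0 nat) \<Rightarrow>\<^sub>0 'k::field"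
  assumes lat: "is_lattice s L" and f: "f \<in> lattice_ideal s L" "f \<noteq> 0"
  shows "\<exists>e'\<in>Poly_Mapping.keys f. e' \<noteq> lead_exp s f \<and> vrel L e' (lead_exp s f) \<and>
      revlex_gt s (lead_exp s f) e'"
proof -
  have fp: "f \<in> polyring s" using f(1) lattice_ideal_polyring by blast
  let ?l = "lead_exp s f"
  note lp = lead_props[OF fp f(2)]
  let ?C = "{e\<in>Poly_Mapping.keys f. vrel L e ?l}"
  have "Phi (\<lambda>e'. vrel L e' ?l) f = 0" by (rule fiber_sum[OF lat f(1)])
  then have sum0: "(\<Sum>e\<in>?C. Poly_Mapping.lookup f e) = 0" by (simp add: Phi_def)
  have lC: "?l \<in> ?C" using lp vrel_refl[OF lat] by blast
  have "\<exists>e'\<in>?C. e' \<noteq> ?l"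
  proof (rule ccontr)
    assume "\<not> ?thesis"
    then have "?C = {?l}" using lC by blast
    then have "Poly_Mapping.lookup f ?l = 0" using sum0 by simp
    then show False using lp by (simp add: in_keys_iff)
  qed
  then show ?thesis using lp by blast
qed

lemma initial_ideal_mono:
  fixes J :: "((nat \<Rightarrow>\<^sub>0 nat) \<Rightarrow>\<^sub>0 'k::field) set"
  assumes "monomial_t m \<in> initial_ideal s J"
  shows "\<exists>f\<in>J. f \<noteq> 0 \<and> (\<exists>r. m = r + lead_exp s f)"
proof -
  obtain F c where F: "finite F" "F \<subseteq> {monomial_t (lead_exp s f) | f. f \<in> J \<and> f \<noteq> 0}"
    "(monomial_t m :: _ \<Rightarrow>\<^sub>0 'k) = (\<Sum>g\<in>F. c g * g)"
    using assms by (auto simp: initial_ideal_def ideal_gen_def)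
  have "Poly_Mapping.lookup (monomial_t m :: _ \<Rightarrow>\<^sub>0 'k) m = 1" by (simp add: monomial_t_def)
  then have "(\<Sum>g\<in>F. Poly_Mapping.lookup (c g * g) m) \<noteq> 0" using F(3) by (simp add: lookup_sum)
  then obtain g where g: "g \<in> F" "Poly_Mapping.lookup (c g * g) m \<noteq> 0" by (meson sum.neutral)
  obtain f where f: "f \<in> J" "f \<noteq> 0" "g = monomial_t (lead_exp s f)" using F(2) g(1) by blast
  have "m \<in> Poly_Mapping.keys (c g * g)" using g(2) by (simp add: in_keys_iff)
  then have "m \<in> {a + b | a b. a \<in> Poly_Mapping.keys (c g) \<and> b \<in> Poly_Mapping.keys g}"
    using keys_mult by blast
  then have "\<exists>r. m = r + lead_exp s f" using f(3) by (auto simp: monomial_t_def)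
  then show ?thesis using f by blast
qed




lemma charA:
  assumes lat: "is_lattice s L" and sm: "supp_lt s m" and sc: "supp_lt s c"
    and rel: "vrel L c m" and ne: "c \<noteq> m" and gt: "revlex_gt s m c"
  shows "(monomial_t m :: (nat \<Rightarrow>\<^sub>0 nat) \<Rightarrow>\<^sub>0 'k::field) \<in> initial_ideal s (lattice_ideal s L)"
proof -
  define a where "a = (\<lambda>i. int (Poly_Mapping.lookup m i) - int (Poly_Mapping.lookup c i))"
  have aL: "a \<in> L" using vrel_sym[OF lat rel] by (simp add: vrel_def a_def)
  define w where "w = mk s (\<lambda>i. min (Poly_Mapping.lookup m i) (Poly_Mapping.lookup c i))"
  have mw: "m = w + pos_part s a"
  proof (rule poly_mapping_eqI)
    fix i show "Poly_Mapping.lookup m i = Poly_Mapping.lookup (w + pos_part s a) i"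
      using sm by (auto simp: w_def lookup_add lookup_mk lookup_pos a_def supp_lt_def)
  qed
  have cw: "c = w + neg_part s a"
  proof (rule poly_mapping_eqI)
    fix i show "Poly_Mapping.lookup c i = Poly_Mapping.lookup (w + neg_part s a) i"
      using sc by (auto simp: w_def lookup_add lookup_mk lookup_neg a_def supp_lt_def)
  qed
  define f :: "(nat \<Rightarrow>\<^sub>0 nat) \<Rightarrow>\<^sub>0 'k" where "f = monomial_t m - monomial_t c"
  have f_eq: "f = monomial_t w * (monomial_t (pos_part s a) - monomial_t (neg_part s a))"
    unfolding f_def monomial_t_def by (simp add: right_diff_distrib mult_single mw cw add.commute)
  have fJ: "f \<in> lattice_ideal s L"
    unfolding lattice_ideal_def ideal_gen_def
    apply (rule CollectI)
    apply (rule exI[of _ "{monomial_t (pos_part s a) - monomial_t (neg_part s a)}"])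
    apply (rule exI[of _ "\<lambda>_. monomial_t w"])
    using aL f_eq polyring_monomial[OF supp_lt_mk[of s], of _] by (auto simp: w_def)
  have lf: "Poly_Mapping.lookup f m = 1" using ne
    by (simp add: f_def monomial_t_def lookup_minus lookup_single)
  then have f0: "f \<noteq> 0" by auto
  have fp: "f \<in> polyring s" using fJ lattice_ideal_polyring by blast
  note lp = lead_props[OF fp f0]
  have keysf: "Poly_Mapping.keys f \<subseteq> {m, c}"
    unfolding f_def monomial_t_def using keys_diff by fastforce
  have mk: "m \<in> Poly_Mapping.keys f" using lf by (simp add: in_keys_iff)
  have "lead_exp s f = m"
  proof (rule ccontr)
    assume "lead_exp s f \<noteq> m"
    then have "lead_exp s f = c" using lp keysf by blast
    then have "revlex_gt s c m" using lp mk ne by auto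
    then show False using rl_asym gt by blast
  qed
  then have "(monomial_t m :: _ \<Rightarrow>\<^sub>0 'k) \<in> {monomial_t (lead_exp s f) | f. f \<in> (lattice_ideal s L :: (_ \<Rightarrow>\<^sub>0 'k) set) \<and> f \<noteq> 0}"
    using fJ f0 by blast
  then show ?thesis
    unfolding initial_ideal_def ideal_gen_def
    apply (intro CollectI exI[of _ "{monomial_t m}"] exI[of _ "\<lambda>_. 1"])
    using polyring_one by auto
qed

lemma charB:
  assumes lat: "is_lattice s L" and sm: "supp_lt s m"
    and mem: "(monomial_t m :: (nat \<Rightarrow>\<^sub>0 nat) \<Rightarrow>\<^sub>0 'k::field) \<in> initial_ideal s (lattice_ideal s L)"
  shows "\<exists>c. supp_lt s c \<and> vrel L c m \<and> c \<noteq> m \<and> revlex_gt s m c"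
proof -
  obtain f :: "(nat \<Rightarrow>\<^sub>0 nat) \<Rightarrow>\<^sub>0 'k" and r where f: "f \<in> lattice_ideal s L" "f \<noteq> 0"
    "m = r + lead_exp s f"
    using initial_ideal_mono[OF mem] by blast
  obtain e' where e': "e' \<in> Poly_Mapping.keys f" "vrel L e' (lead_exp s f)" "revlex_gt s (lead_exp s f) e'"
    using lead_below[OF lat f(1,2)] by blast
  have fp: "f \<in> polyring s" using f(1) lattice_ideal_polyring by blast
  have se: "supp_lt s e'" using polyring_keys[OF fp e'(1)] .
  have sr: "supp_lt s r" using sm f(3) by (auto simp: supp_lt_def lookup_add)
  have "supp_lt s (e' + r)" using se sr by (rule supp_lt_add)
  moreover have "vrel L (e' + r) m" using e'(2) f(3) vrel_shift[of L e' r "lead_exp s f"]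
    by (simp add: add.commute)
  moreover have "revlex_gt s m (e' + r)" using e'(3) f(3) rl_shift[of s "lead_exp s f" r e']
    by (simp add: add.commute)
  moreover have "e' + r \<noteq> m" using calculation(3) rl_irrefl by metis
  ultimately show ?thesis by blast
qed




lemma E_mk: "Abs_poly_mapping (\<lambda>i. if i < s - 1 then nat (a i) else 0) = mk (s - 1) (\<lambda>i. nat (a i))"
  by (simp add: mk_def)

lemma supp_lt_mono: "supp_lt t e \<Longrightarrow> t \<le> s \<Longrightarrow> supp_lt s e"
  by (simp add: supp_lt_def)

theorem lemma3p10:
  fixes s :: nat and L :: "(nat \<Rightarrow> int) set" and \<alpha> :: "nat \<Rightarrow> int"
  assumes "s \<ge> 2"
    and "is_lattice s L"
    and "homogeneous_lattice s L"
    and "lattice_rank_eq s L (s - 1)"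
    and "\<alpha> \<in> Zs s"
    and "\<exists>n::int. n > 0 \<and> (\<lambda>i. n * \<alpha> i) \<in> L"
  shows "\<exists>!a. a \<in> Zs s \<and> (\<forall>i < s - 1. a i \<ge> 0) \<and>
           (monomial_t (Abs_poly_mapping (\<lambda>i. if i < s - 1 then nat (a i) else 0)) :: (nat \<Rightarrow>\<^sub>0 nat) \<Rightarrow>\<^sub>0 'k::field)
              \<notin> initial_ideal s (lattice_ideal s L :: ((nat \<Rightarrow>\<^sub>0 nat) \<Rightarrow>\<^sub>0 'k) set) \<and>
           (\<lambda>i. a i - \<alpha> i) \<in> L"
proof -
  note s2 = assms(1) and lat = assms(2) and hom = assms(3) and rk = assms(4) and aZ = assms(5)
  have sS: "{..<s} = insert (s - 1) {..<s - 1}" using s2 by auto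
  have s1: "s - 1 < s" using s2 by simp
  have homL: "x \<in> L \<Longrightarrow> (\<Sum>i<s. x i) = 0" for x using hom by (simp add: homogeneous_lattice_def)
  obtain n :: int where n: "n > 0" "(\<lambda>i. n * \<alpha> i) \<in> L" using assms(6) by blast
  have "n * (\<Sum>i<s. \<alpha> i) = 0" using homL[OF n(2)] by (simp add: sum_distrib_left)
  then have asum: "(\<Sum>i<s. \<alpha> i) = 0" using n(1) by simp
  define E where "E a = mk (s - 1) (\<lambda>i. nat (a i))" for a :: "nat \<Rightarrow> int"
  have lookE: "Poly_Mapping.lookup (E a) i = (if i < s - 1 then nat (a i) else 0)" for a i
    by (simp add: E_def lookup_mk)
  have suppE: "supp_lt s (E a)" for a by (simp add: supp_lt_def lookE)
  define P where "P a \<longleftrightarrow> a \<in> Zs s \<and> (\<forall>i < s - 1. a i \<ge> 0) \<and>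
           (monomial_t (E a) :: (nat \<Rightarrow>\<^sub>0 nat) \<Rightarrow>\<^sub>0 'k)
              \<notin> initial_ideal s (lattice_ideal s L :: ((nat \<Rightarrow>\<^sub>0 nat) \<Rightarrow>\<^sub>0 'k) set) \<and>
           (\<lambda>i. a i - \<alpha> i) \<in> L" for a
  have Pmin: "\<not> revlex_gt s (E a) c" if "P a" "supp_lt s c" "vrel L c (E a)" "c \<noteq> E a" for a c
  proof
    assume "revlex_gt s (E a) c"
    then have "(monomial_t (E a) :: (nat \<Rightarrow>\<^sub>0 nat) \<Rightarrow>\<^sub>0 'k) \<in> initial_ideal s (lattice_ideal s L)"
      using charA[OF lat suppE that(2,3,4)] by blast
    then show False using that(1) by (simp add: P_def)
  qed
  have diffE: "(\<lambda>i. int (Poly_Mapping.lookup (E a) i) - int (Poly_Mapping.lookup (E b) i)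
      + (if i = s - 1 then a i - b i else 0)) = (\<lambda>i. a i - b i)"
    if "P a" "P b" for a b
  proof
    fix i
    show "int (Poly_Mapping.lookup (E a) i) - int (Poly_Mapping.lookup (E b) i)
      + (if i = s - 1 then a i - b i else 0) = a i - b i"
      using that by (cases "i < s - 1"; cases "i = s - 1") (auto simp: lookE P_def Zs_def)
  qed
  have abL: "(\<lambda>i. a i - b i) \<in> L" if "P a" "P b" for a b
    using lat_diff[OF lat, of "\<lambda>i. a i - \<alpha> i" "\<lambda>i. b i - \<alpha> i"] that by (simp add: P_def)
  have uniq: "a = b" if Pa: "P a" and Pb: "P b" and le: "b (s - 1) \<le> a (s - 1)" for a b
  proof (cases "b (s - 1) = a (s - 1)")
    case False
    define k where "k = nat (a (s - 1) - b (s - 1))"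
    have kpos: "k > 0" using False le by (simp add: k_def)
    define c where "c = E a + Poly_Mapping.single (s - 1) k"
    have lookc: "Poly_Mapping.lookup c i = Poly_Mapping.lookup (E a) i + (if i = s - 1 then k else 0)" for i
      by (simp add: c_def lookup_add lookup_single when_def)
    have sc: "supp_lt s c" using suppE[of a] s1 by (auto simp: supp_lt_def lookc)
    have "(\<lambda>i. int (Poly_Mapping.lookup c i) - int (Poly_Mapping.lookup (E b) i)) = (\<lambda>i. a i - b i)"
    proof -
      have "(\<lambda>i. int (Poly_Mapping.lookup c i) - int (Poly_Mapping.lookup (E b) i)) =
        (\<lambda>i. int (Poly_Mapping.lookup (E a) i) - int (Poly_Mapping.lookup (E b) i)
           + (if i = s - 1 then a i - b i else 0))"
        using le by (auto simp: lookc k_def fun_eq_iff)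
      then show ?thesis using diffE[OF Pa Pb] by simp
    qed
    then have rel: "vrel L c (E b)" using abL[OF Pa Pb] by (simp add: vrel_def)
    have c_s1: "Poly_Mapping.lookup c (s - 1) = k" by (simp add: lookc lookE)
    have Eb_s1: "Poly_Mapping.lookup (E b) (s - 1) = 0" by (simp add: lookE)
    have ne: "c \<noteq> E b" using c_s1 Eb_s1 kpos by auto
    have "revlex_gt s (E b) c" unfolding revlex_gt_def
      using s1 c_s1 Eb_s1 kpos by (intro exI[of _ "s - 1"]) auto
    then show ?thesis using Pmin[OF Pb sc rel ne] by simp
  next
    case True
    have "(\<lambda>i. int (Poly_Mapping.lookup (E a) i) - int (Poly_Mapping.lookup (E b) i)) = (\<lambda>i. a i - b i)"
    proof
      fix i
      from fun_cong[OF diffE[OF Pa Pb], of i] True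
      show "int (Poly_Mapping.lookup (E a) i) - int (Poly_Mapping.lookup (E b) i) = a i - b i"
        by (cases "i = s - 1") auto
    qed
    then have rel: "vrel L (E a) (E b)" using abL[OF Pa Pb] by (simp add: vrel_def)
    have EE: "E a = E b"
    proof (rule ccontr)
      assume ne: "E a \<noteq> E b"
      then consider "revlex_gt s (E a) (E b)" | "revlex_gt s (E b) (E a)"
        using rl_total[OF suppE suppE] by blast
      then show False
      proof cases
        case 1
        then show False using Pmin[OF Pa suppE vrel_sym[OF lat rel]] ne by auto
      next
        case 2
        then show False using Pmin[OF Pb suppE rel] ne by auto
      qed
    qed
    show ?thesis
    proof
      fix i
      show "a i = b i"
      proof (cases "i < s - 1")
        case True
        have "nat (a i) = nat (b i)" using EE lookE[of a i] lookE[of b i] True by simp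
        moreover have "a i \<ge> 0" "b i \<ge> 0" using Pa Pb True by (auto simp: P_def)
        ultimately show ?thesis by (metis int_nat_eq)
      next
        case False
        then show ?thesis using \<open>b (s - 1) = a (s - 1)\<close> Pa Pb
          by (cases "i = s - 1") (auto simp: P_def Zs_def)
      qed
    qed
  qed
  have ex: "\<exists>a. P a"
  proof -
    define h :: "nat \<Rightarrow> int" where "h i = (if i < s - 1 then 1 else if i = s - 1 then - (int s - 1) else 0)" for i
    have hZ: "h \<in> Zs s" using s2 by (auto simp: Zs_def h_def)
    have "(\<Sum>i<s. h i) = h (s - 1) + (\<Sum>i<s - 1. h i)" unfolding sS by simp
    also have "(\<Sum>i<s - 1. h i) = (\<Sum>i<s - 1. 1)" by (rule sum.cong) (auto simp: h_def)
    finally have hsum: "(\<Sum>i<s. h i) = 0" using s2 by (simp add: h_def of_nat_diff)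
    obtain M :: int where M: "M > 0" "(\<lambda>i. M * h i) \<in> L"
      using finite_index[OF s2 lat hom rk hZ hsum] by blast
    define K where "K = (\<Sum>i<s. \<bar>\<alpha> i\<bar>)"
    have K0: "K \<ge> 0" by (simp add: K_def sum_nonneg)
    have Ka: "i < s \<Longrightarrow> \<bar>\<alpha> i\<bar> \<le> K" for i
      unfolding K_def by (rule member_le_sum) auto
    have KM: "K \<le> K * M" using K0 M(1) by (simp add: mult_le_cancel_left1)
    define D :: nat where "D = nat (\<bar>\<alpha> (s - 1)\<bar> + K * M * (int s - 1))"
    have D_eq: "int D = \<bar>\<alpha> (s - 1)\<bar> + K * M * (int s - 1)"
      unfolding D_def using K0 M(1) s2 by (intro int_nat_eq[THEN trans]) (simp add: zero_le_mult_iff)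
    define v where "v i = \<alpha> i + K * (M * h i) + (if i = s - 1 then int D else 0)" for i
    have v0: "v i \<ge> 0" if "i < s" for i
    proof (cases "i < s - 1")
      case True
      then have "v i = \<alpha> i + K * M" by (simp add: v_def h_def)
      then show ?thesis using Ka[OF that] KM by linarith
    next
      case False
      then have "i = s - 1" using that by simp
      then have "v i = \<alpha> (s - 1) + \<bar>\<alpha> (s - 1)\<bar>" by (simp add: v_def h_def D_eq algebra_simps)
      then show ?thesis by linarith
    qed
    define vr where "vr c d \<longleftrightarrow> (\<lambda>i. int (Poly_Mapping.lookup c i) - \<alpha> i - (if i = s - 1 then int d else 0)) \<in> L" for c d
    define Fs where "Fs d = {c. supp_lt s c \<and> vr c d}" for d
    define c0 where "c0 = mk s (\<lambda>i. nat (v i))"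
    have "(\<lambda>i. int (Poly_Mapping.lookup c0 i) - \<alpha> i - (if i = s - 1 then int D else 0)) = (\<lambda>i. K * (M * h i))"
    proof
      fix i show "int (Poly_Mapping.lookup c0 i) - \<alpha> i - (if i = s - 1 then int D else 0) = K * (M * h i)"
      proof (cases "i < s")
        case True then show ?thesis using v0[OF True] by (simp add: c0_def lookup_mk v_def)
      next
        case False then show ?thesis using aZ s1 by (auto simp: c0_def lookup_mk h_def Zs_def)
      qed
    qed
    then have "c0 \<in> Fs D" using lat_smult[OF lat M(2), of K] by (simp add: Fs_def vr_def c0_def supp_lt_mk)
    then have neD: "Fs D \<noteq> {}" by blast
    define d0 where "d0 = (LEAST d. Fs d \<noteq> {})"
    have ne0: "Fs d0 \<noteq> {}" unfolding d0_def by (rule LeastI[of _ D]) (rule neD)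
    have least: "d < d0 \<Longrightarrow> Fs d = {}" for d unfolding d0_def using not_less_Least by blast
    have csum: "(\<Sum>i<s. int (Poly_Mapping.lookup c i)) = int d" if "c \<in> Fs d" for c d
    proof -
      have "(\<Sum>i<s. int (Poly_Mapping.lookup c i) - \<alpha> i - (if i = s - 1 then int d else 0)) = 0"
        using homL that by (simp add: Fs_def vr_def)
      then show ?thesis using asum s1 by (simp add: sum_subtractf)
    qed
    have cbound: "Poly_Mapping.lookup c i \<le> d" if "c \<in> Fs d" for c d i
    proof (cases "i < s")
      case True
      have "int (Poly_Mapping.lookup c i) \<le> (\<Sum>i<s. int (Poly_Mapping.lookup c i))"
        by (rule member_le_sum) (use True in auto)
      then show ?thesis using csum[OF that] by simp
    next
      case False then show ?thesis using that by (simp add: Fs_def supp_lt_def)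
    qed
    have finF: "finite (Fs d)" for d
    proof (rule finite_subset)
      show "Fs d \<subseteq> (\<lambda>xs. mk s (\<lambda>i. xs ! i)) ` {xs. set xs \<subseteq> {0..d} \<and> length xs = s}"
      proof
        fix c assume c: "c \<in> Fs d"
        have "c = mk s (\<lambda>i. map (Poly_Mapping.lookup c) [0..<s] ! i)"
          by (rule poly_mapping_eqI) (use c in \<open>auto simp: lookup_mk Fs_def supp_lt_def\<close>)
        moreover have "map (Poly_Mapping.lookup c) [0..<s] \<in> {xs. set xs \<subseteq> {0..d} \<and> length xs = s}"
          using cbound[OF c] by auto
        ultimately show "c \<in> (\<lambda>xs. mk s (\<lambda>i. xs ! i)) ` {xs. set xs \<subseteq> {0..d} \<and> length xs = s}" by blast
      qed
      show "finite ((\<lambda>xs. mk s (\<lambda>i. xs ! i)) ` {xs. set xs \<subseteq> {0..d} \<and> length xs = s})"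
        by (intro finite_imageI finite_lists_length_eq) auto
    qed
    have "\<exists>x\<in>Fs d0. \<forall>y\<in>Fs d0. y \<noteq> x \<longrightarrow> revlex_gt s y x"
    proof (rule finite_max[where R = "\<lambda>x y. revlex_gt s y x"])
      show "finite (Fs d0)" by (rule finF)
      show "Fs d0 \<noteq> {}" by (rule ne0)
      show "\<forall>x\<in>Fs d0. \<forall>y\<in>Fs d0. \<forall>z\<in>Fs d0. revlex_gt s y x \<longrightarrow> revlex_gt s z y \<longrightarrow> revlex_gt s z x"
        using rl_trans by blast
      show "\<forall>x\<in>Fs d0. \<forall>y\<in>Fs d0. x \<noteq> y \<longrightarrow> revlex_gt s y x \<or> revlex_gt s x y"
        using rl_total by (auto simp: Fs_def)
    qed
    then obtain m where m: "m \<in> Fs d0" "\<forall>y\<in>Fs d0. y \<noteq> m \<longrightarrow> revlex_gt s y m" by blast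
    have sm: "supp_lt s m" using m(1) by (simp add: Fs_def)
    have m_s1: "Poly_Mapping.lookup m (s - 1) = 0"
    proof (rule ccontr)
      assume pos: "Poly_Mapping.lookup m (s - 1) \<noteq> 0"
      then have d0pos: "d0 \<ge> 1" using cbound[OF m(1), of "s - 1"] by simp
      define m' where "m' = mk s (\<lambda>i. if i = s - 1 then Poly_Mapping.lookup m i - 1 else Poly_Mapping.lookup m i)"
      have eqv: "(\<lambda>i. int (Poly_Mapping.lookup m' i) - \<alpha> i - (if i = s - 1 then int (d0 - 1) else 0)) =
            (\<lambda>i. int (Poly_Mapping.lookup m i) - \<alpha> i - (if i = s - 1 then int d0 else 0))"
      proof
        fix i show "int (Poly_Mapping.lookup m' i) - \<alpha> i - (if i = s - 1 then int (d0 - 1) else 0) =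
            int (Poly_Mapping.lookup m i) - \<alpha> i - (if i = s - 1 then int d0 else 0)"
          using pos d0pos sm s1 by (auto simp: m'_def lookup_mk supp_lt_def of_nat_diff)
      qed
      have "vr m' (d0 - 1)" unfolding vr_def eqv using m(1) by (simp add: Fs_def vr_def)
      then have "m' \<in> Fs (d0 - 1)" by (simp add: Fs_def m'_def supp_lt_mk)
      moreover have "Fs (d0 - 1) = {}" using least d0pos by simp
      ultimately show False by blast
    qed
    define a where "a i = (if i < s - 1 then int (Poly_Mapping.lookup m i) else if i = s - 1 then - int d0 else 0)" for i
    have Ea: "E a = m"
    proof (rule poly_mapping_eqI)
      fix i show "Poly_Mapping.lookup (E a) i = Poly_Mapping.lookup m i"
        using m_s1 sm by (cases "i < s - 1"; cases "i = s - 1") (auto simp: lookE a_def supp_lt_def)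
    qed
    have aL: "(\<lambda>i. a i - \<alpha> i) = (\<lambda>i. int (Poly_Mapping.lookup m i) - \<alpha> i - (if i = s - 1 then int d0 else 0))"
    proof
      fix i show "a i - \<alpha> i = int (Poly_Mapping.lookup m i) - \<alpha> i - (if i = s - 1 then int d0 else 0)"
        using m_s1 sm by (cases "i < s - 1"; cases "i = s - 1") (auto simp: a_def supp_lt_def)
    qed
    have notin: "(monomial_t m :: (nat \<Rightarrow>\<^sub>0 nat) \<Rightarrow>\<^sub>0 'k) \<notin> initial_ideal s (lattice_ideal s L)"
    proof
      assume "(monomial_t m :: (nat \<Rightarrow>\<^sub>0 nat) \<Rightarrow>\<^sub>0 'k) \<in> initial_ideal s (lattice_ideal s L)"
      then obtain c where c: "supp_lt s c" "vrel L c m" "c \<noteq> m" "revlex_gt s m c"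
        using charB[OF lat sm] by blast
      have "(\<lambda>i. (int (Poly_Mapping.lookup c i) - int (Poly_Mapping.lookup m i)) +
          (int (Poly_Mapping.lookup m i) - \<alpha> i - (if i = s - 1 then int d0 else 0))) \<in> L"
        using lat_add[OF lat, of "\<lambda>i. int (Poly_Mapping.lookup c i) - int (Poly_Mapping.lookup m i)"
            "\<lambda>i. int (Poly_Mapping.lookup m i) - \<alpha> i - (if i = s - 1 then int d0 else 0)"]
          c(2) m(1) by (simp add: vrel_def Fs_def vr_def)
      moreover have "(\<lambda>i. (int (Poly_Mapping.lookup c i) - int (Poly_Mapping.lookup m i)) +
          (int (Poly_Mapping.lookup m i) - \<alpha> i - (if i = s - 1 then int d0 else 0))) =
          (\<lambda>i. int (Poly_Mapping.lookup c i) - \<alpha> i - (if i = s - 1 then int d0 else 0))" by auto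
      ultimately have "vr c d0" unfolding vr_def by simp
      then have "c \<in> Fs d0" using c(1) by (simp add: Fs_def)
      then have "revlex_gt s c m" using m(2) c(3) by blast
      then show False using rl_asym c(4) by blast
    qed
    have "P a"
    proof -
      have "a \<in> Zs s" using s1 by (auto simp: a_def Zs_def)
      moreover have "\<forall>i < s - 1. a i \<ge> 0" by (simp add: a_def)
      moreover have "(\<lambda>i. a i - \<alpha> i) \<in> L" unfolding aL using m(1) by (simp add: Fs_def vr_def)
      ultimately show ?thesis unfolding P_def using Ea notin by simp
    qed
    then show ?thesis by blast
  qed
  then obtain a where "P a" by blast
  have "\<exists>!a. P a"
  proof (rule ex1I[of _ a])
    show "P a" by fact
    fix b assume "P b"
    show "b = a"
    proof (cases "a (s - 1) \<le> b (s - 1)")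
      case True then show ?thesis using uniq[OF \<open>P b\<close> \<open>P a\<close>] by simp
    next
      case False then show ?thesis using uniq[OF \<open>P a\<close> \<open>P b\<close>] by simp
    qed
  qed
  then show ?thesis unfolding P_def E_def E_mk[symmetric] .
qed


end
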